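(* Let $X$ be a $3$-long liner. If $X$ is proaffine, then any lines $L,\Lambda$ in $X$ satisfy $|L|\le|\Lambda|+2$. If $X$ is Proclus, then any lines $L,\Lambda$ in $X$ satisfy $|L|\le|\Lambda|+1$.
   Context: A liner is a set $X$ of points with a family of subsets called lines such that any two distinct points lie in a unique line and every line contains at least two points. For distinct $x,y$, $\overline{xy}$ is the line through them and $\overline{xx}:=\{x\}$. A set is flat if it contains $\overline{xy}$ for all its distinct points; $\overline A$ is the smallest flat containing $A$; the rank $\|A\|$ is the smallest cardinality of $B$ with $A\subseteq\overline B$; a plane is a flat of rank 3. $X$ is $3$-long if every line has at least $3$ points. $X$ is proaffine if for all $o,x,y\in X$ and $p\in\overline{xy}\setminus\overline{ox}$ there exists $u\in\overline{oy}$ such that $\overline{vp}\cap\overline{ox}\ne\varnothing$ for every $v\in\overline{oy}\setminus\{u\}$. $X$ is Proclus if for every plane $P$, line $L\subseteq P$ and point $x\in P\setminus L$ there is at most one line $\Lambda$ with $x\in\Lambda\subseteq P\setminus L$. *)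

theory Defs
  imports Main "HOL-Library.Equipollence"
begin

definition liner :: "'a set \<Rightarrow> 'a set set \<Rightarrow> bool" where
  "liner X Ls \<longleftrightarrow>
     (\<forall>L\<in>Ls. L \<subseteq> X \<and> (\<exists>x y. x \<in> L \<and> y \<in> L \<and> x \<noteq> y)) \<and>
     (\<forall>x\<in>X. \<forall>y\<in>X. x \<noteq> y \<longrightarrow> (\<exists>!L. L \<in> Ls \<and> x \<in> L \<and> y \<in> L))"

definition lin :: "'a set set \<Rightarrow> 'a \<Rightarrow> 'a \<Rightarrow> 'a set" where
  "lin Ls x y = (if x = y then {x} else (THE L. L \<in> Ls \<and> x \<in> L \<and> y \<in> L))"

definition flat :: "'a set \<Rightarrow> 'a set set \<Rightarrow> 'a set \<Rightarrow> bool" where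
  "flat X Ls A \<longleftrightarrow> A \<subseteq> X \<and> (\<forall>x\<in>A. \<forall>y\<in>A. x \<noteq> y \<longrightarrow> lin Ls x y \<subseteq> A)"

definition flat_hull :: "'a set \<Rightarrow> 'a set set \<Rightarrow> 'a set \<Rightarrow> 'a set" where
  "flat_hull X Ls A = \<Inter>{F. flat X Ls F \<and> A \<subseteq> F}"

definition rank_le :: "'a set \<Rightarrow> 'a set set \<Rightarrow> 'a set \<Rightarrow> nat \<Rightarrow> bool" where
  "rank_le X Ls A n \<longleftrightarrow> (\<exists>B. B \<subseteq> X \<and> finite B \<and> card B \<le> n \<and> A \<subseteq> flat_hull X Ls B)"

definition plane :: "'a set \<Rightarrow> 'a set set \<Rightarrow> 'a set \<Rightarrow> bool" where
  "plane X Ls P \<longleftrightarrow> flat X Ls P \<and> rank_le X Ls P 3 \<and> \<not> rank_le X Ls P 2"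

definition three_long :: "'a set set \<Rightarrow> bool" where
  "three_long Ls \<longleftrightarrow> (\<forall>L\<in>Ls. \<exists>a b c. a \<in> L \<and> b \<in> L \<and> c \<in> L \<and> a \<noteq> b \<and> a \<noteq> c \<and> b \<noteq> c)"

definition proaffine :: "'a set \<Rightarrow> 'a set set \<Rightarrow> bool" where
  "proaffine X Ls \<longleftrightarrow>
    (\<forall>w\<in>X. \<forall>x\<in>X. \<forall>y\<in>X. \<forall>p \<in> lin Ls x y - lin Ls w x.
       \<exists>u \<in> lin Ls w y. \<forall>v \<in> lin Ls w y - {u}. lin Ls v p \<inter> lin Ls w x \<noteq> {})"

definition proclus :: "'a set \<Rightarrow> 'a set set \<Rightarrow> bool" where
  "proclus X Ls \<longleftrightarrow>
    (\<forall>P L x. plane X Ls P \<and> L \<in> Ls \<and> L \<subseteq> P \<and> x \<in> P - L \<longrightarrow>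
       (\<forall>M1 M2. M1 \<in> Ls \<and> x \<in> M1 \<and> M1 \<subseteq> P - L \<and> M2 \<in> Ls \<and> x \<in> M2 \<and> M2 \<subseteq> P - L
                  \<longrightarrow> M1 = M2))"

end

theory Submission
  imports Defs
begin

lemma liner_D1: assumes "liner X Ls" "L \<in> Ls" shows "L \<subseteq> X \<and> (\<exists>x y. x \<in> L \<and> y \<in> L \<and> x \<noteq> y)"
proof -
  have H: "\<forall>L\<in>Ls. L \<subseteq> X \<and> (\<exists>x y. x \<in> L \<and> y \<in> L \<and> x \<noteq> y)" using assms(1) unfolding liner_def by (rule conjunct1)
  show ?thesis using H assms(2) by (rule bspec)
qed

lemma liner_D2: assumes "liner X Ls" "x \<in> X" "y \<in> X" "x \<noteq> y" shows "\<exists>!L. L \<in> Ls \<and> x \<in> L \<and> y \<in> L"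
proof -
  have H: "\<forall>x\<in>X. \<forall>y\<in>X. x \<noteq> y \<longrightarrow> (\<exists>!L. L \<in> Ls \<and> x \<in> L \<and> y \<in> L)" using assms(1) unfolding liner_def by (rule conjunct2)
  show ?thesis using H[rule_format, OF assms(2,3,4)] .
qed

lemma liner_sub: "liner X Ls \<Longrightarrow> L \<in> Ls \<Longrightarrow> L \<subseteq> X"
  using liner_D1 by blast

lemma liner_two: "liner X Ls \<Longrightarrow> L \<in> Ls \<Longrightarrow> \<exists>x y. x \<in> L \<and> y \<in> L \<and> x \<noteq> y"
  using liner_D1 by blast

lemma lin_props:
  assumes "liner X Ls" "x \<in> X" "y \<in> X" "x \<noteq> y"
  shows "lin Ls x y \<in> Ls \<and> x \<in> lin Ls x y \<and> y \<in> lin Ls x y"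
proof -
  have "\<exists>!L. L \<in> Ls \<and> x \<in> L \<and> y \<in> L" using liner_D2[OF assms] .
  then have "(THE L. L \<in> Ls \<and> x \<in> L \<and> y \<in> L) \<in> Ls \<and> x \<in> (THE L. L \<in> Ls \<and> x \<in> L \<and> y \<in> L) \<and> y \<in> (THE L. L \<in> Ls \<and> x \<in> L \<and> y \<in> L)"
    by (rule theI')
  then show ?thesis using assms(4) unfolding lin_def by simp
qed

lemma lin_eq:
  assumes "liner X Ls" "L \<in> Ls" "x \<in> L" "y \<in> L" "x \<noteq> y"
  shows "lin Ls x y = L"
proof -
  have X: "x \<in> X" "y \<in> X" using assms(3,4) liner_sub[OF assms(1,2)] by blast+
  have "\<exists>!L. L \<in> Ls \<and> x \<in> L \<and> y \<in> L" using liner_D2[OF assms(1) X assms(5)] .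
  then have "(THE L. L \<in> Ls \<and> x \<in> L \<and> y \<in> L) = L"
    using assms by (intro the1_equality) auto
  then show ?thesis using assms(5) unfolding lin_def by simp
qed

lemma line_eq:
  assumes "liner X Ls" "L \<in> Ls" "M \<in> Ls" "x \<in> L" "y \<in> L" "x \<in> M" "y \<in> M" "x \<noteq> y"
  shows "L = M"
  using lin_eq[OF assms(1,2,4,5,8)] lin_eq[OF assms(1,3,6,7,8)] by simp

lemma three_pt:
  assumes "three_long Ls" "L \<in> Ls"
  shows "\<exists>c\<in>L. c \<noteq> x \<and> c \<noteq> y"
proof -
  obtain a b c where "a \<in> L" "b \<in> L" "c \<in> L" "a \<noteq> b" "a \<noteq> c" "b \<noteq> c"
    using assms unfolding three_long_def by blast
  show ?thesis
  proof (cases "a \<noteq> x \<and> a \<noteq> y")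
    case True then show ?thesis using \<open>a \<in> L\<close> by blast
  next
    case F1: False
    show ?thesis
    proof (cases "b \<noteq> x \<and> b \<noteq> y")
      case True then show ?thesis using \<open>b \<in> L\<close> by blast
    next
      case False
      then have "c \<noteq> x \<and> c \<noteq> y" using F1 \<open>a \<noteq> b\<close> \<open>a \<noteq> c\<close> \<open>b \<noteq> c\<close> by auto
      then show ?thesis using \<open>c \<in> L\<close> by blast
    qed
  qed
qed

lemma three_card:
  assumes "three_long Ls" "L \<in> Ls" "finite L"
  shows "3 \<le> card L"
proof -
  obtain a b c where "a \<in> L" "b \<in> L" "c \<in> L" "a \<noteq> b" "a \<noteq> c" "b \<noteq> c"
    using assms unfolding three_long_def by blast
  then have "card {a,b,c} \<le> card L" by (intro card_mono assms) auto
  then show ?thesis using \<open>a \<noteq> b\<close> \<open>a \<noteq> c\<close> \<open>b \<noteq> c\<close> by simp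
qed

lemma flat_X: assumes "liner X Ls" shows "flat X Ls X"
  unfolding flat_def
proof (intro conjI ballI impI)
  fix x y assume xy: "x \<in> X" "y \<in> X" "x \<noteq> y"
  then have "lin Ls x y \<in> Ls" using lin_props[OF assms xy] by blast
  then show "lin Ls x y \<subseteq> X" using liner_sub[OF assms] by blast
qed simp

lemma flat_line: assumes "liner X Ls" "L \<in> Ls" shows "flat X Ls L"
  unfolding flat_def using liner_sub[OF assms] lin_eq[OF assms] by simp

lemma flat_single: "x \<in> X \<Longrightarrow> flat X Ls {x}"
  unfolding flat_def by auto

lemma hull_sub: "A \<subseteq> flat_hull X Ls A"
  unfolding flat_hull_def by blast

lemma hull_min: "flat X Ls F \<Longrightarrow> A \<subseteq> F \<Longrightarrow> flat_hull X Ls A \<subseteq> F"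
  unfolding flat_hull_def by blast

lemma hull_flat:
  assumes "liner X Ls" "A \<subseteq> X"
  shows "flat X Ls (flat_hull X Ls A)"
proof -
  have 1: "flat_hull X Ls A \<subseteq> X" using hull_min[OF flat_X[OF assms(1)] assms(2)] .
  have 2: "lin Ls x y \<subseteq> flat_hull X Ls A" if "x \<in> flat_hull X Ls A" "y \<in> flat_hull X Ls A" "x \<noteq> y" for x y
  proof
    fix z assume z: "z \<in> lin Ls x y"
    show "z \<in> flat_hull X Ls A" unfolding flat_hull_def
    proof
      fix F assume F: "F \<in> {F. flat X Ls F \<and> A \<subseteq> F}"
      then have "x \<in> F" "y \<in> F" using that unfolding flat_hull_def by blast+
      then show "z \<in> F" using F z that(3) unfolding flat_def by blast
    qed
  qed
  show ?thesis unfolding flat_def using 1 2 by blast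
qed

lemma flat_lin: assumes "flat X Ls F" "x \<in> F" "y \<in> F" shows "lin Ls x y \<subseteq> F"
proof (cases "x = y")
  case True then show ?thesis using assms(2) by (simp add: lin_def)
next
  case False then show ?thesis using assms unfolding flat_def by blast
qed

lemma flat_subX: "flat X Ls F \<Longrightarrow> F \<subseteq> X"
  unfolding flat_def by blast

lemma card_le2:
  assumes "finite B" "card B \<le> 2" "x \<in> B" "y \<in> B" "z \<in> B"
  shows "x = y \<or> x = z \<or> y = z"
proof (rule ccontr)
  assume "\<not> ?thesis"
  then have d: "x \<noteq> y" "x \<noteq> z" "y \<noteq> z" by auto
  then have "card {x,y,z} = 3" by simp
  moreover have "card {x,y,z} \<le> card B" using assms by (intro card_mono) auto
  ultimately show False using assms by simp
qed

lemma plane_hull: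
  assumes "liner X Ls" "a \<in> X" "b \<in> X" "c \<in> X" "a \<noteq> b" "c \<notin> lin Ls a b"
  shows "plane X Ls (flat_hull X Ls {a,b,c})"
proof -
  let ?P = "flat_hull X Ls {a,b,c}"
  have fl: "flat X Ls ?P" using hull_flat[OF assms(1)] assms(2,3,4) by simp
  have r3: "rank_le X Ls ?P 3"
    unfolding rank_le_def using assms by (intro exI[of _ "{a,b,c}"]) (auto simp: card_insert_if)
  have abc: "a \<in> ?P" "b \<in> ?P" "c \<in> ?P" using hull_sub[of "{a,b,c}" X Ls] by blast+
  have nr2: "\<not> rank_le X Ls ?P 2"
  proof
    assume "rank_le X Ls ?P 2"
    then obtain B where B: "B \<subseteq> X" "finite B" "card B \<le> 2" "?P \<subseteq> flat_hull X Ls B"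
      unfolding rank_le_def by blast
    have inB: "a \<in> flat_hull X Ls B" "b \<in> flat_hull X Ls B" "c \<in> flat_hull X Ls B" using abc B(4) by blast+
    show False
    proof (cases "B = {}")
      case True
      have "flat X Ls {}" unfolding flat_def by simp
      then have "flat_hull X Ls B \<subseteq> {}" using hull_min[of X Ls "{}" B] True by blast
      then show False using inB by simp
    next
      case False
      then obtain p where p: "p \<in> B" by blast
      show False
      proof (cases "B = {p}")
        case True
        then have "flat_hull X Ls B \<subseteq> {p}" using hull_min[OF flat_single[of p X Ls]] B(1) p by blast
        then show False using inB assms(5) by blast
      next
        case False
        then obtain q where q: "q \<in> B" "q \<noteq> p" using p by blast
        have Bpq: "B \<subseteq> {p,q}" using card_le2[OF B(2,3)] p q by blast
        have pq: "lin Ls p q \<in> Ls" "p \<in> lin Ls p q" "q \<in> lin Ls p q" using lin_props[OF assms(1), of p q] B(1) p q by blast+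
        have "flat_hull X Ls B \<subseteq> lin Ls p q" using hull_min[OF flat_line[OF assms(1) pq(1)]] Bpq pq by blast
        then have "a \<in> lin Ls p q" "b \<in> lin Ls p q" "c \<in> lin Ls p q" using inB by blast+
        then have "lin Ls a b = lin Ls p q" using lin_eq[OF assms(1) pq(1)] assms(5) by blast
        then show False using assms(6) \<open>c \<in> lin Ls p q\<close> by simp
      qed
    qed
  qed
  show ?thesis unfolding plane_def using fl r3 nr2 by blast
qed

definition near :: "'a set \<Rightarrow> 'a set \<Rightarrow> bool" where
  "near L K \<longleftrightarrow> (\<exists>u f. inj_on f (L - {u}) \<and> f ` (L - {u}) \<subseteq> K)"

lemma near_center:
  assumes lin: "liner X Ls" and LK: "L \<in> Ls" "K \<in> Ls" and p: "p \<in> X" "p \<notin> L" "p \<notin> K"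
    and meet: "\<forall>v \<in> L - {u}. lin Ls v p \<inter> K \<noteq> {}"
  shows "near L K"
proof -
  define f where "f v = (SOME z. z \<in> lin Ls v p \<inter> K)" for v
  have fv: "f v \<in> lin Ls v p \<inter> K" if "v \<in> L - {u}" for v
  proof -
    have "\<exists>z. z \<in> lin Ls v p \<inter> K" using meet that by blast
    then show ?thesis unfolding f_def by (rule someI_ex)
  qed
  have inj: "inj_on f (L - {u})"
  proof (rule inj_onI)
    fix v1 v2 assume v: "v1 \<in> L - {u}" "v2 \<in> L - {u}" "f v1 = f v2"
    have z1: "f v1 \<in> lin Ls v1 p" "f v1 \<in> K" using fv[OF v(1)] by auto
    have z2: "f v1 \<in> lin Ls v2 p" using fv[OF v(2)] v(3) by auto
    have vX: "v1 \<in> X" "v2 \<in> X" using v liner_sub[OF lin LK(1)] by blast+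
    have vp: "v1 \<noteq> p" "v2 \<noteq> p" using v p(2) by auto
    have l1: "lin Ls v1 p \<in> Ls" "v1 \<in> lin Ls v1 p" "p \<in> lin Ls v1 p" using lin_props[OF lin vX(1) p(1) vp(1)] by blast+
    have l2: "lin Ls v2 p \<in> Ls" "v2 \<in> lin Ls v2 p" "p \<in> lin Ls v2 p" using lin_props[OF lin vX(2) p(1) vp(2)] by blast+
    have zp: "f v1 \<noteq> p" using z1(2) p(3) by auto
    have eq: "lin Ls v1 p = lin Ls v2 p" using line_eq[OF lin l1(1) l2(1) l1(3) z1(1) l2(3) z2 zp[symmetric]] .
    show "v1 = v2"
    proof (rule ccontr)
      assume ne: "v1 \<noteq> v2"
      have "v2 \<in> lin Ls v1 p" using eq l2(2) by simp
      then have "lin Ls v1 p = L" using line_eq[OF lin l1(1) LK(1) l1(2) _ _ _ ne] v by blast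
      then show False using l1(3) p(2) by simp
    qed
  qed
  show ?thesis unfolding near_def using inj fv by blast
qed

lemma setup_pts:
  assumes lin: "liner X Ls" and tl: "three_long Ls"
    and LK: "L \<in> Ls" "K \<in> Ls" "L \<noteq> K" "ob \<in> L" "ob \<in> K"
  shows "\<exists>x y p. x \<in> K \<and> x \<noteq> ob \<and> y \<in> L \<and> y \<noteq> ob \<and> x \<notin> L \<and> y \<notin> K \<and> x \<noteq> y \<and>
     p \<in> lin Ls x y \<and> p \<in> X \<and> p \<notin> L \<and> p \<notin> K \<and> ob \<in> X \<and> x \<in> X \<and> y \<in> X \<and>
     lin Ls ob x = K \<and> lin Ls ob y = L \<and> lin Ls x y \<in> Ls"
proof -
  obtain y where y: "y \<in> L" "y \<noteq> ob" using three_pt[OF tl LK(1), of ob ob] by blast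
  obtain x where x: "x \<in> K" "x \<noteq> ob" using three_pt[OF tl LK(2), of ob ob] by blast
  have yK: "y \<notin> K"
  proof
    assume "y \<in> K"
    then have "L = K" using line_eq[OF lin LK(1,2) LK(4) y(1) LK(5)] y(2) by blast
    then show False using LK(3) by simp
  qed
  have xL: "x \<notin> L"
  proof
    assume "x \<in> L"
    then have "L = K" using line_eq[OF lin LK(1,2) LK(4) _ LK(5) x(1)] x(2) by blast
    then show False using LK(3) by simp
  qed
  have X: "ob \<in> X" "x \<in> X" "y \<in> X" using liner_sub[OF lin] LK x y by blast+
  have xy: "x \<noteq> y" using x yK by blast
  have lxy: "lin Ls x y \<in> Ls" "x \<in> lin Ls x y" "y \<in> lin Ls x y" using lin_props[OF lin X(2,3) xy] by blast+
  obtain p where p: "p \<in> lin Ls x y" "p \<noteq> x" "p \<noteq> y" using three_pt[OF tl lxy(1)] by blast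
  have pK: "p \<notin> K"
  proof
    assume "p \<in> K"
    then have "lin Ls x y = K" using line_eq[OF lin lxy(1) LK(2) p(1) lxy(2) _ x(1) p(2)] by blast
    then show False using lxy(3) yK by simp
  qed
  have pL: "p \<notin> L"
  proof
    assume "p \<in> L"
    then have "lin Ls x y = L" using line_eq[OF lin lxy(1) LK(1) p(1) lxy(3) _ y(1) p(3)] by blast
    then show False using lxy(2) xL by simp
  qed
  have pX: "p \<in> X" using liner_sub[OF lin lxy(1)] p by blast
  have Kox: "lin Ls ob x = K" using lin_eq[OF lin LK(2) LK(5) x(1)] x(2) by auto
  have Loy: "lin Ls ob y = L" using lin_eq[OF lin LK(1) LK(4) y(1)] y(2) by auto
  show ?thesis using x y xL yK xy p pX pL pK X Kox Loy lxy(1) by blast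
qed

lemma near_proaff:
  assumes lin: "liner X Ls" and tl: "three_long Ls" and pa: "proaffine X Ls"
    and LK: "L \<in> Ls" "K \<in> Ls" "L \<noteq> K" "ob \<in> L" "ob \<in> K"
  shows "near L K"
proof -
  obtain x y p where S: "x \<in> K" "x \<noteq> ob" "y \<in> L" "y \<noteq> ob" "x \<notin> L" "y \<notin> K" "x \<noteq> y"
     "p \<in> lin Ls x y" "p \<in> X" "p \<notin> L" "p \<notin> K" "ob \<in> X" "x \<in> X" "y \<in> X"
     "lin Ls ob x = K" "lin Ls ob y = L"
    using setup_pts[OF lin tl LK] by blast
  have H: "\<forall>w\<in>X. \<forall>x\<in>X. \<forall>y\<in>X. \<forall>p \<in> lin Ls x y - lin Ls w x.
       \<exists>u \<in> lin Ls w y. \<forall>v \<in> lin Ls w y - {u}. lin Ls v p \<inter> lin Ls w x \<noteq> {}"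
    using pa unfolding proaffine_def .
  have "p \<in> lin Ls x y - lin Ls ob x" using S by simp
  then have "\<exists>u \<in> lin Ls ob y. \<forall>v \<in> lin Ls ob y - {u}. lin Ls v p \<inter> lin Ls ob x \<noteq> {}"
    using H S(12,13,14) by blast
  then obtain u where "\<forall>v \<in> L - {u}. lin Ls v p \<inter> K \<noteq> {}" using S(15,16) by auto
  then show ?thesis using near_center[OF lin LK(1,2) S(9,10,11)] by blast
qed

lemma proclus_unique:
  assumes pc: "proclus X Ls" and P: "plane X Ls P" and K: "K \<in> Ls" "K \<subseteq> P" and z: "z \<in> P" "z \<notin> K"
    and N1: "N1 \<in> Ls" "z \<in> N1" "N1 \<subseteq> P" "N1 \<inter> K = {}"
    and N2: "N2 \<in> Ls" "z \<in> N2" "N2 \<subseteq> P" "N2 \<inter> K = {}"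
  shows "N1 = N2"
proof -
  have H: "\<forall>P L x. plane X Ls P \<and> L \<in> Ls \<and> L \<subseteq> P \<and> x \<in> P - L \<longrightarrow>
       (\<forall>M1 M2. M1 \<in> Ls \<and> x \<in> M1 \<and> M1 \<subseteq> P - L \<and> M2 \<in> Ls \<and> x \<in> M2 \<and> M2 \<subseteq> P - L
                  \<longrightarrow> M1 = M2)" using pc unfolding proclus_def .
  have a: "plane X Ls P \<and> K \<in> Ls \<and> K \<subseteq> P \<and> z \<in> P - K" using P K z by blast
  have b: "N1 \<in> Ls \<and> z \<in> N1 \<and> N1 \<subseteq> P - K \<and> N2 \<in> Ls \<and> z \<in> N2 \<and> N2 \<subseteq> P - K" using N1 N2 by blast
  show ?thesis using H[rule_format, OF a b] .
qed

lemma near_proclus: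
  assumes lin: "liner X Ls" and tl: "three_long Ls" and pc: "proclus X Ls"
    and LK: "L \<in> Ls" "K \<in> Ls" "L \<noteq> K" "ob \<in> L" "ob \<in> K"
  shows "near L K"
proof -
  obtain x y p where S: "x \<in> K" "x \<noteq> ob" "y \<in> L" "y \<noteq> ob" "x \<notin> L" "y \<notin> K" "x \<noteq> y"
     "p \<in> lin Ls x y" "p \<in> X" "p \<notin> L" "p \<notin> K" "ob \<in> X" "x \<in> X" "y \<in> X"
     "lin Ls ob x = K" "lin Ls ob y = L"
    using setup_pts[OF lin tl LK] by blast
  define P where "P = flat_hull X Ls {ob, y, x}"
  have xn: "x \<notin> lin Ls ob y" using S(5,16) by simp
  have pl: "plane X Ls P" unfolding P_def using plane_hull[OF lin S(12) S(14) S(13) S(4)[symmetric] xn] .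
  have sX: "{ob, y, x} \<subseteq> X" using S(12,13,14) by simp
  have fl: "flat X Ls P" unfolding P_def using hull_flat[OF lin sX] .
  have inP: "ob \<in> P" "y \<in> P" "x \<in> P" unfolding P_def using hull_sub[of "{ob,y,x}" X Ls] by blast+
  have LP: "L \<subseteq> P" using flat_lin[OF fl inP(1,2)] S(16) by simp
  have KP: "K \<subseteq> P" using flat_lin[OF fl inP(1,3)] S(15) by simp
  have pP: "p \<in> P" using flat_lin[OF fl inP(3,2)] S(8) by blast
  have uniq: "v1 = v2" if v: "v1 \<in> L" "v2 \<in> L" "lin Ls v1 p \<inter> K = {}" "lin Ls v2 p \<inter> K = {}" for v1 v2
  proof -
    have vX: "v1 \<in> X" "v2 \<in> X" using v liner_sub[OF lin LK(1)] by blast+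
    have vp: "v1 \<noteq> p" "v2 \<noteq> p" using v S(10) by auto
    have l1: "lin Ls v1 p \<in> Ls" "v1 \<in> lin Ls v1 p" "p \<in> lin Ls v1 p" using lin_props[OF lin vX(1) S(9) vp(1)] by blast+
    have l2: "lin Ls v2 p \<in> Ls" "v2 \<in> lin Ls v2 p" "p \<in> lin Ls v2 p" using lin_props[OF lin vX(2) S(9) vp(2)] by blast+
    have s1: "lin Ls v1 p \<subseteq> P" using flat_lin[OF fl _ pP] v(1) LP by blast
    have s2: "lin Ls v2 p \<subseteq> P" using flat_lin[OF fl _ pP] v(2) LP by blast
    have eq: "lin Ls v1 p = lin Ls v2 p"
      using proclus_unique[OF pc pl LK(2) KP pP S(11) l1(1) l1(3) s1 v(3) l2(1) l2(3) s2 v(4)] .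
    show "v1 = v2"
    proof (rule ccontr)
      assume ne: "v1 \<noteq> v2"
      have "v2 \<in> lin Ls v1 p" using eq l2(2) by simp
      then have "lin Ls v1 p = L" using line_eq[OF lin l1(1) LK(1) l1(2) _ _ _ ne] v by blast
      then show False using l1(3) S(10) by simp
    qed
  qed
  define u where "u = (if \<exists>v. v \<in> L \<and> lin Ls v p \<inter> K = {} then (SOME v. v \<in> L \<and> lin Ls v p \<inter> K = {}) else ob)"
  have "\<forall>v \<in> L - {u}. lin Ls v p \<inter> K \<noteq> {}"
  proof (intro ballI notI)
    fix v assume v: "v \<in> L - {u}" and e: "lin Ls v p \<inter> K = {}"
    then have ex: "\<exists>v. v \<in> L \<and> lin Ls v p \<inter> K = {}" by blast
    then have "u = (SOME v. v \<in> L \<and> lin Ls v p \<inter> K = {})" unfolding u_def by (rule if_P)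
    then have "u \<in> L \<and> lin Ls u p \<inter> K = {}" using someI_ex[OF ex] by simp
    then have "v = u" using uniq v e by blast
    then show False using v by simp
  qed
  then show ?thesis using near_center[OF lin LK(1,2) S(9,10,11)] by blast
qed

lemma pencil_bound:
  assumes lin: "liner X Ls" and pc: "proclus X Ls" and pl: "plane X Ls P"
    and K: "K \<in> Ls" "K \<subseteq> P" "finite K" and z: "z \<in> P" "z \<notin> K"
    and S: "\<forall>N\<in>S. N \<in> Ls \<and> z \<in> N \<and> N \<subseteq> P"
  shows "finite S \<and> card S \<le> card K + 1"
proof -
  define S1 where "S1 = {N \<in> S. N \<inter> K \<noteq> {}}"
  define f where "f N = (SOME w. w \<in> N \<inter> K)" for N
  have f1: "f N \<in> N \<inter> K" if "N \<in> S1" for N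
  proof -
    have "\<exists>w. w \<in> N \<inter> K" using that unfolding S1_def by blast
    then show ?thesis unfolding f_def by (rule someI_ex)
  qed
  have inj: "inj_on f S1"
  proof (rule inj_onI)
    fix N1 N2 assume N: "N1 \<in> S1" "N2 \<in> S1" "f N1 = f N2"
    have w: "f N1 \<in> N1" "f N1 \<in> N2" "f N1 \<in> K" using f1[OF N(1)] f1[OF N(2)] N(3) by auto
    have zz: "z \<in> N1" "z \<in> N2" "N1 \<in> Ls" "N2 \<in> Ls" using N S unfolding S1_def by auto
    have "z \<noteq> f N1" using w(3) z(2) by auto
    then show "N1 = N2" using line_eq[OF lin zz(3,4) zz(1) w(1) zz(2) w(2)] by blast
  qed
  have img: "f ` S1 \<subseteq> K" using f1 by blast
  have fin1: "finite S1" using finite_imageD[OF finite_subset[OF img K(3)] inj] .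
  have c1: "card S1 \<le> card K" using card_inj_on_le[OF inj img K(3)] .
  have uniq: "\<forall>N1\<in>S - S1. \<forall>N2\<in>S - S1. N1 = N2"
  proof (intro ballI)
    fix N1 N2 assume N: "N1 \<in> S - S1" "N2 \<in> S - S1"
    have a: "N1 \<in> Ls" "z \<in> N1" "N1 \<subseteq> P" "N1 \<inter> K = {}" using N(1) S unfolding S1_def by auto
    have b: "N2 \<in> Ls" "z \<in> N2" "N2 \<subseteq> P" "N2 \<inter> K = {}" using N(2) S unfolding S1_def by auto
    show "N1 = N2" using proclus_unique[OF pc pl K(1,2) z a b] .
  qed
  have fin2: "finite (S - S1)"
  proof (cases "S - S1 = {}")
    case True show ?thesis unfolding True by simp
  next
    case False
    then obtain N0 where "N0 \<in> S - S1" by blast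
    then have "S - S1 \<subseteq> {N0}" using uniq by blast
    then show ?thesis using finite_subset by blast
  qed
  have c2: "card (S - S1) \<le> 1" using card_le_Suc0_iff_eq[OF fin2] uniq by simp
  have SU: "S = S1 \<union> (S - S1)" unfolding S1_def by blast
  have "finite S" using SU fin1 fin2 by (metis finite_UnI)
  moreover have "card S \<le> card S1 + card (S - S1)" using SU card_Un_le by metis
  ultimately show ?thesis using c1 c2 by linarith
qed

definition near2 :: "'a set \<Rightarrow> 'a set \<Rightarrow> bool" where
  "near2 L K \<longleftrightarrow> (\<exists>u1 u2 f. inj_on f (L - {u1, u2}) \<and> f ` (L - {u1, u2}) \<subseteq> K)"

lemma near_refl: "near L L"
  unfolding near_def by (rule exI[of _ undefined], rule exI[of _ id]) auto

lemma near_near2: "near L K \<Longrightarrow> near2 L K"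
  unfolding near_def near2_def by (metis insert_absorb2)

lemma near_trans2:
  assumes "near L M" "near M K" shows "near2 L K"
proof -
  obtain u1 f where f: "inj_on f (L - {u1})" "f ` (L - {u1}) \<subseteq> M" using assms(1) unfolding near_def by blast
  obtain u2 g where g: "inj_on g (M - {u2})" "g ` (M - {u2}) \<subseteq> K" using assms(2) unfolding near_def by blast
  define w where "w = (if \<exists>v. v \<in> L - {u1} \<and> f v = u2 then (SOME v. v \<in> L - {u1} \<and> f v = u2) else u1)"
  have fw: "f v \<noteq> u2" if "v \<in> L - {u1, w}" for v
  proof
    assume e: "f v = u2"
    then have ex: "\<exists>v. v \<in> L - {u1} \<and> f v = u2" using that by blast
    then have "w = (SOME v. v \<in> L - {u1} \<and> f v = u2)" unfolding w_def by (rule if_P)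
    then have "w \<in> L - {u1} \<and> f w = u2" using someI_ex[OF ex] by simp
    then have "v = w" using f(1) e that unfolding inj_on_def by blast
    then show False using that by blast
  qed
  have "inj_on (g \<circ> f) (L - {u1, w})"
  proof (rule inj_onI)
    fix x y assume xy: "x \<in> L - {u1, w}" "y \<in> L - {u1, w}" "(g \<circ> f) x = (g \<circ> f) y"
    have "f x \<in> M - {u2}" "f y \<in> M - {u2}" using fw xy(1,2) f(2) by blast+
    then have "f x = f y" using g(1) xy(3) unfolding inj_on_def by simp
    then show "x = y" using f(1) xy(1,2) unfolding inj_on_def by blast
  qed
  moreover have "(g \<circ> f) ` (L - {u1, w}) \<subseteq> K" using fw f(2) g(2) by fastforce
  ultimately show ?thesis unfolding near2_def by blast
qed

lemma near_lepoll: assumes "near L K" shows "L \<lesssim> K <+> (UNIV :: unit set)"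
proof -
  obtain u f where f: "inj_on f (L - {u})" "f ` (L - {u}) \<subseteq> K" using assms unfolding near_def by blast
  define h where "h v = (if v = u then Inr () else Inl (f v))" for v
  have "inj_on h L" using f(1) unfolding inj_on_def h_def by auto
  moreover have "h ` L \<subseteq> K <+> (UNIV :: unit set)" using f(2) unfolding h_def by auto
  ultimately show ?thesis unfolding lepoll_def by blast
qed

lemma near2_lepoll: assumes "near2 L K" shows "L \<lesssim> K <+> (UNIV :: bool set)"
proof -
  obtain u1 u2 f where f: "inj_on f (L - {u1, u2})" "f ` (L - {u1, u2}) \<subseteq> K" using assms unfolding near2_def by blast
  define h where "h v = (if v = u1 then Inr True else if v = u2 then Inr False else Inl (f v))" for v
  have "inj_on h L"
  proof (rule inj_onI)
    fix x y assume xy: "x \<in> L" "y \<in> L" "h x = h y"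
    have i: "x \<in> L - {u1, u2} \<Longrightarrow> y \<in> L - {u1, u2} \<Longrightarrow> f x = f y \<Longrightarrow> x = y"
      using f(1) unfolding inj_on_def by blast
    show "x = y"
    proof (cases "x = u1 \<or> x = u2 \<or> y = u1 \<or> y = u2")
      case True
      then show ?thesis using xy(3) unfolding h_def by (auto split: if_split_asm)
    next
      case False
      then have "f x = f y" using xy(3) unfolding h_def by simp
      then show ?thesis using i xy(1,2) False by blast
    qed
  qed
  moreover have "h ` L \<subseteq> K <+> (UNIV :: bool set)" using f(2) unfolding h_def by auto
  ultimately show ?thesis unfolding lepoll_def by blast
qed

lemma near_card: assumes "near L K" "finite K" shows "finite L \<and> card L \<le> card K + 1"
proof -
  obtain u f where f: "inj_on f (L - {u})" "f ` (L - {u}) \<subseteq> K" using assms unfolding near_def by blast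
  have fin: "finite (L - {u})" using finite_imageD[OF finite_subset[OF f(2) assms(2)] f(1)] .
  have c: "card (L - {u}) \<le> card K" using card_inj_on_le[OF f(1) f(2) assms(2)] .
  have finL: "finite L" using fin by simp
  have "card L \<le> Suc (card (L - {u}))"
  proof (cases "u \<in> L")
    case True then show ?thesis using card_Suc_Diff1[OF finL True] by simp
  next
    case False then show ?thesis by simp
  qed
  then show ?thesis using c finL by simp
qed

lemma infinite_near2: assumes "near2 L K" "infinite K" shows "L \<lesssim> K <+> (UNIV :: unit set)"
proof -
  have 1: "L \<lesssim> K <+> (UNIV :: bool set)" using near2_lepoll[OF assms(1)] .
  have injI: "inj_on (Inl :: 'a \<Rightarrow> 'a + bool) K" by (simp add: inj_on_def)
  have inf: "infinite (Inl ` K :: ('a + bool) set)"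
  proof
    assume "finite (Inl ` K :: ('a + bool) set)"
    then have "finite K" using finite_imageD[OF _ injI] by blast
    then show False using assms(2) by simp
  qed
  have sub: "K <+> (UNIV :: bool set) \<subseteq> insert (Inr True) (insert (Inr False) (Inl ` K))"
  proof
    fix z assume z: "z \<in> K <+> (UNIV :: bool set)"
    show "z \<in> insert (Inr True) (insert (Inr False) (Inl ` K))"
    proof (cases z)
      case (Inl x)
      then have "x \<in> K" using z by auto
      then show ?thesis using Inl by simp
    next
      case (Inr bb)
      then show ?thesis by (cases bb) simp_all
    qed
  qed
  have inf2: "infinite (insert (Inr False) (Inl ` K) :: ('a + bool) set)" using inf by simp
  have 2: "insert (Inr True) (insert (Inr False) (Inl ` K)) \<lesssim> insert (Inr False) (Inl ` K)"
    using infinite_insert_lepoll[OF inf2] .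
  have 3: "insert (Inr False) (Inl ` K) \<lesssim> (Inl ` K :: ('a + bool) set)"
    using infinite_insert_lepoll[OF inf] .
  have 4: "(Inl ` K :: ('a + bool) set) \<lesssim> K" by (rule image_lepoll)
  have 5: "K \<lesssim> K <+> (UNIV :: unit set)"
    unfolding lepoll_def by (rule exI[of _ Inl]) auto
  show ?thesis
    using lepoll_trans[OF 1 lepoll_trans[OF subset_imp_lepoll[OF sub] lepoll_trans[OF 2 lepoll_trans[OF 3 lepoll_trans[OF 4 5]]]]] .
qed

lemma proaff_all:
  assumes lin: "liner X Ls" and tl: "three_long Ls" and pa: "proaffine X Ls"
    and LK: "L \<in> Ls" "K \<in> Ls"
  shows "L \<lesssim> K <+> (UNIV :: bool set)"
proof (cases "L = K")
  case True then show ?thesis using near2_lepoll[OF near_near2[OF near_refl]] by simp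
next
  case ne: False
  show ?thesis
  proof (cases "L \<inter> K = {}")
    case False
    then obtain ob where "ob \<in> L" "ob \<in> K" by blast
    then show ?thesis using near2_lepoll[OF near_near2[OF near_proaff[OF lin tl pa LK ne]]] by blast
  next
    case True
    obtain a where a: "a \<in> L" using liner_two[OF lin LK(1)] by blast
    obtain b where b: "b \<in> K" using liner_two[OF lin LK(2)] by blast
    have ab: "a \<noteq> b" using a b True by blast
    have X: "a \<in> X" "b \<in> X" using a b liner_sub[OF lin] LK by blast+
    have M: "lin Ls a b \<in> Ls" "a \<in> lin Ls a b" "b \<in> lin Ls a b" using lin_props[OF lin X ab] by blast+
    have "lin Ls a b \<noteq> L" using M(3) b True by blast
    then have n1: "near L (lin Ls a b)" using near_proaff[OF lin tl pa LK(1) M(1) _ a M(2)] by blast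
    have "lin Ls a b \<noteq> K" using M(2) a True by blast
    then have n2: "near (lin Ls a b) K" using near_proaff[OF lin tl pa M(1) LK(2) _ M(3) b] by blast
    show ?thesis using near2_lepoll[OF near_trans2[OF n1 n2]] .
  qed
qed


lemma PC:
  assumes lin: "liner X Ls" and pc: "proclus X Ls" and pl: "plane X Ls P"
    and L: "L \<in> Ls" "L \<subseteq> P" "finite L" "card L = Suc n"
    and b: "b \<in> P" "b \<notin> L"
    and sz: "\<forall>a\<in>L. card (lin Ls b a) = n" and n3: "3 \<le> n"
  shows False
proof -
  have fl: "flat X Ls P" using pl unfolding plane_def by blast
  have PX: "P \<subseteq> X" using flat_subX[OF fl] .
  have linP: "lin Ls x y \<subseteq> P" if "x \<in> P" "y \<in> P" for x y using flat_lin[OF fl that] .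
  have lp: "lin Ls x y \<in> Ls \<and> x \<in> lin Ls x y \<and> y \<in> lin Ls x y" if "x \<in> P" "y \<in> P" "x \<noteq> y" for x y
  proof -
    have "x \<in> X" "y \<in> X" using that(1,2) PX by blast+
    then show ?thesis using lin_props[OF lin _ _ that(3)] by blast
  qed
  have bl: "lin Ls b a \<in> Ls \<and> b \<in> lin Ls b a \<and> a \<in> lin Ls b a \<and> lin Ls b a \<subseteq> P \<and> finite (lin Ls b a)" if a: "a \<in> L" for a
  proof -
    have aP: "a \<in> P" using a L(2) by blast
    have "b \<noteq> a" using a b(2) by blast
    then have 1: "lin Ls b a \<in> Ls \<and> b \<in> lin Ls b a \<and> a \<in> lin Ls b a" using lp[OF b(1) aP] by blast
    have 2: "lin Ls b a \<subseteq> P" using linP[OF b(1) aP] .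
    have c: "card (lin Ls b a) = n" using sz a by blast
    have 3: "finite (lin Ls b a)"
    proof (rule ccontr)
      assume "infinite (lin Ls b a)"
      then have "card (lin Ls b a) = 0" by (rule card.infinite)
      then show False using c n3 by linarith
    qed
    show ?thesis using 1 2 3 by blast
  qed
  have yinj: "inj_on (\<lambda>u. lin Ls y u) L" if y: "y \<in> P" "y \<notin> L" for y
  proof (rule inj_onI)
    fix u1 u2 assume u: "u1 \<in> L" "u2 \<in> L" "lin Ls y u1 = lin Ls y u2"
    show "u1 = u2"
    proof (rule ccontr)
      assume ne: "u1 \<noteq> u2"
      have u1P: "u1 \<in> P" using u(1) L(2) by blast
      have u2P: "u2 \<in> P" using u(2) L(2) by blast
      have yu1: "y \<noteq> u1" using y(2) u(1) by blast
      have yu2: "y \<noteq> u2" using y(2) u(2) by blast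
      have l1: "lin Ls y u1 \<in> Ls" "y \<in> lin Ls y u1" "u1 \<in> lin Ls y u1" using lp[OF y(1) u1P yu1] by blast+
      have "u2 \<in> lin Ls y u1" using lp[OF y(1) u2P yu2] u(3) by simp
      then have "lin Ls y u1 = L" using line_eq[OF lin l1(1) L(1) l1(3) _ u(1) u(2) ne] by blast
      then show False using l1(2) y(2) by simp
    qed
  qed
  have ylines: "\<forall>N\<in>(\<lambda>u. lin Ls y u) ` L. N \<in> Ls \<and> y \<in> N \<and> N \<subseteq> P" if y: "y \<in> P" "y \<notin> L" for y
  proof
    fix N assume "N \<in> (\<lambda>u. lin Ls y u) ` L"
    then obtain u where u: "u \<in> L" "N = lin Ls y u" by blast
    have uP: "u \<in> P" using u(1) L(2) by blast
    have "y \<noteq> u" using y(2) u(1) by blast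
    then show "N \<in> Ls \<and> y \<in> N \<and> N \<subseteq> P" using lp[OF y(1) uP] linP[OF y(1) uP] u(2) by blast
  qed
  obtain a1 a2 where a12: "a1 \<in> L" "a2 \<in> L" "a1 \<noteq> a2" using liner_two[OF lin L(1)] by blast
  have nopar1: "N \<inter> L \<noteq> {}" if y: "y \<in> P" "y \<notin> L" "y \<noteq> b" and N: "N \<in> Ls" "y \<in> N" "N \<subseteq> P" for y N
  proof
    assume NL: "N \<inter> L = {}"
    have "\<exists>a'\<in>L. y \<notin> lin Ls b a'"
    proof (rule ccontr)
      assume "\<not> ?thesis"
      then have y12: "y \<in> lin Ls b a1" "y \<in> lin Ls b a2" using a12 by blast+
      have B1: "lin Ls b a1 \<in> Ls" "b \<in> lin Ls b a1" "a1 \<in> lin Ls b a1" using bl[OF a12(1)] by blast+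
      have B2: "lin Ls b a2 \<in> Ls" "b \<in> lin Ls b a2" "a2 \<in> lin Ls b a2" using bl[OF a12(2)] by blast+
      have "lin Ls b a1 = lin Ls b a2" using line_eq[OF lin B1(1) B2(1) B1(2) y12(1) B2(2) y12(2) y(3)[symmetric]] .
      then have "a2 \<in> lin Ls b a1" using B2(3) by simp
      then have "lin Ls b a1 = L" using line_eq[OF lin B1(1) L(1) B1(3) _ a12(1) a12(2) a12(3)] by blast
      then show False using B1(2) b(2) by simp
    qed
    then obtain a' where a': "a' \<in> L" "y \<notin> lin Ls b a'" by blast
    define S where "S = insert N ((\<lambda>u. lin Ls y u) ` L)"
    have Sp: "\<forall>N'\<in>S. N' \<in> Ls \<and> y \<in> N' \<and> N' \<subseteq> P" using ylines[OF y(1,2)] N unfolding S_def by blast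
    have K: "lin Ls b a' \<in> Ls" "lin Ls b a' \<subseteq> P" "finite (lin Ls b a')" using bl[OF a'(1)] by blast+
    have bound: "finite S \<and> card S \<le> card (lin Ls b a') + 1"
      using pencil_bound[OF lin pc pl K y(1) a'(2) Sp] .
    have notin: "N \<notin> (\<lambda>u. lin Ls y u) ` L"
    proof
      assume "N \<in> (\<lambda>u. lin Ls y u) ` L"
      then obtain u where u: "u \<in> L" "N = lin Ls y u" by blast
      have uP: "u \<in> P" using u(1) L(2) by blast
      have "y \<noteq> u" using y(2) u(1) by blast
      then have "u \<in> N" using lp[OF y(1) uP] u(2) by blast
      then show False using NL u(1) by blast
    qed
    have "card S = Suc (card ((\<lambda>u. lin Ls y u) ` L))" unfolding S_def
      using card_insert_disjoint[OF finite_imageI[OF L(3)] notin] .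
    also have "card ((\<lambda>u. lin Ls y u) ` L) = Suc n" using card_image[OF yinj[OF y(1,2)]] L(4) by simp
    finally have "card S = Suc (Suc n)" .
    then show False using bound sz a'(1) by simp
  qed
  have nopar: "N \<inter> L \<noteq> {}" if y: "y \<in> P" "y \<notin> L" and N: "N \<in> Ls" "y \<in> N" "N \<subseteq> P" for y N
  proof (cases "y = b")
    case False show ?thesis using nopar1[OF y False N] .
  next
    case True
    show ?thesis
    proof
      assume NL: "N \<inter> L = {}"
      obtain p q where pq: "p \<in> N" "q \<in> N" "p \<noteq> q" using liner_two[OF lin N(1)] by blast
      obtain y' where y': "y' \<in> N" "y' \<noteq> b"
      proof (cases "p = b")
        case True then show ?thesis using that pq by blast
      next
        case False then show ?thesis using that pq by blast
      qed
      have "y' \<in> P" "y' \<notin> L" using y' N(3) NL by blast+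
      then have "N \<inter> L \<noteq> {}" using nopar1[OF _ _ y'(2) N(1) y'(1) N(3)] by blast
      then show False using NL by simp
    qed
  qed
  have cover: "P = insert y (\<Union>u\<in>L. lin Ls y u - {y})" if y: "y \<in> P" "y \<notin> L" for y
  proof
    show "insert y (\<Union>u\<in>L. lin Ls y u - {y}) \<subseteq> P"
    proof -
      have "lin Ls y u \<subseteq> P" if "u \<in> L" for u using linP[OF y(1)] that L(2) by blast
      then show ?thesis using y(1) by blast
    qed
  next
    show "P \<subseteq> insert y (\<Union>u\<in>L. lin Ls y u - {y})"
    proof
      fix z assume z: "z \<in> P"
      show "z \<in> insert y (\<Union>u\<in>L. lin Ls y u - {y})"
      proof (cases "z = y")
        case True then show ?thesis by simp
      next
        case False
        have N: "lin Ls y z \<in> Ls" "y \<in> lin Ls y z" "z \<in> lin Ls y z" using lp[OF y(1) z] False by auto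
        have NP: "lin Ls y z \<subseteq> P" using linP[OF y(1) z] .
        obtain u where u: "u \<in> lin Ls y z" "u \<in> L" using nopar[OF y N(1) N(2) NP] by blast
        have "y \<noteq> u" using y(2) u(2) by blast
        then have "lin Ls y u = lin Ls y z" using lin_eq[OF lin N(1) N(2) u(1)] by simp
        then show ?thesis using N(3) u(2) False by blast
      qed
    qed
  qed
  have finP: "finite P"
  proof -
    have "finite (\<Union>u\<in>L. lin Ls b u - {b})"
    proof (rule finite_UN_I[OF L(3)])
      fix u assume "u \<in> L" then show "finite (lin Ls b u - {b})" using bl by blast
    qed
    then show ?thesis using cover[OF b] by (metis finite_insert)
  qed
  have cardP_gen: "card P = Suc (\<Sum>u\<in>L. card (lin Ls y u) - 1)" if y: "y \<in> P" "y \<notin> L" for y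
  proof -
    have fins: "\<forall>u\<in>L. finite (lin Ls y u - {y})"
    proof
      fix u assume "u \<in> L"
      then have "lin Ls y u \<subseteq> P" using linP[OF y(1)] L(2) by blast
      then show "finite (lin Ls y u - {y})" using finP finite_subset by blast
    qed
    have disj: "\<forall>u1\<in>L. \<forall>u2\<in>L. u1 \<noteq> u2 \<longrightarrow> (lin Ls y u1 - {y}) \<inter> (lin Ls y u2 - {y}) = {}"
    proof (intro ballI impI)
      fix u1 u2 assume u: "u1 \<in> L" "u2 \<in> L" "u1 \<noteq> u2"
      show "(lin Ls y u1 - {y}) \<inter> (lin Ls y u2 - {y}) = {}"
      proof (rule ccontr)
        assume "\<not> ?thesis"
        then obtain z where z: "z \<in> lin Ls y u1" "z \<in> lin Ls y u2" "z \<noteq> y" by blast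
        have u1P: "u1 \<in> P" using u(1) L(2) by blast
        have u2P: "u2 \<in> P" using u(2) L(2) by blast
        have l1: "lin Ls y u1 \<in> Ls" "y \<in> lin Ls y u1" using lp[OF y(1) u1P] y(2) u(1) by auto
        have l2: "lin Ls y u2 \<in> Ls" "y \<in> lin Ls y u2" using lp[OF y(1) u2P] y(2) u(2) by auto
        have "lin Ls y u1 = lin Ls y u2" using line_eq[OF lin l1(1) l2(1) l1(2) z(1) l2(2) z(2) z(3)[symmetric]] .
        then show False using yinj[OF y] u unfolding inj_on_def by blast
      qed
    qed
    have notin: "y \<notin> (\<Union>u\<in>L. lin Ls y u - {y})" by blast
    have finU: "finite (\<Union>u\<in>L. lin Ls y u - {y})"
    proof (rule finite_UN_I[OF L(3)])
      fix u assume "u \<in> L" then show "finite (lin Ls y u - {y})" using fins by blast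
    qed
    have "card P = Suc (card (\<Union>u\<in>L. lin Ls y u - {y}))"
      using cover[OF y] card_insert_disjoint[OF finU notin] by simp
    also have "card (\<Union>u\<in>L. lin Ls y u - {y}) = (\<Sum>u\<in>L. card (lin Ls y u - {y}))"
      using card_UN_disjoint[OF L(3) fins disj] .
    also have "\<dots> = (\<Sum>u\<in>L. card (lin Ls y u) - 1)"
    proof (rule sum.cong)
      fix u assume u: "u \<in> L"
      have uP: "u \<in> P" using u L(2) by blast
      have "y \<in> lin Ls y u" using lp[OF y(1) uP] y(2) u by auto
      then show "card (lin Ls y u - {y}) = card (lin Ls y u) - 1" by (rule card_Diff_singleton)
    qed simp
    finally show ?thesis .
  qed
  have cardP: "card P = Suc (Suc n * (n - 1))"
  proof -
    have "(\<Sum>u\<in>L. card (lin Ls b u) - 1) = (\<Sum>u\<in>L. n - 1)" using sz by (intro sum.cong) auto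
    then show ?thesis using cardP_gen[OF b] L(4) by simp
  qed
  have lower: "n \<le> card (lin Ls y u)" if y: "y \<in> P" "y \<notin> L" and u: "u \<in> L" for y u
  proof -
    have uP: "u \<in> P" using u L(2) by blast
    have yu: "y \<noteq> u" using y(2) u by blast
    have l: "lin Ls y u \<in> Ls" "y \<in> lin Ls y u" "u \<in> lin Ls y u" using lp[OF y(1) uP yu] by blast+
    show ?thesis
    proof (cases "b \<in> lin Ls y u")
      case True
      have "b \<noteq> u" using b(2) u by blast
      then have e: "lin Ls b u = lin Ls y u" using lin_eq[OF lin l(1) True l(3)] by simp
      have c: "card (lin Ls b u) = n" using sz u by blast
      show ?thesis using c unfolding e by simp
    next
      case False
      have KP: "lin Ls y u \<subseteq> P" using linP[OF y(1) uP] .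
      have Kf: "finite (lin Ls y u)" using finite_subset[OF KP finP] .
      have "finite ((\<lambda>a. lin Ls b a) ` L) \<and> card ((\<lambda>a. lin Ls b a) ` L) \<le> card (lin Ls y u) + 1"
        using pencil_bound[OF lin pc pl l(1) KP Kf b(1) False ylines[OF b]] .
      moreover have "card ((\<lambda>a. lin Ls b a) ` L) = Suc n" using card_image[OF yinj[OF b]] L(4) by simp
      ultimately show ?thesis by simp
    qed
  qed
  have exact: "card (lin Ls y u) = n" if y: "y \<in> P" "y \<notin> L" and u: "u \<in> L" for y u
  proof (rule ccontr)
    assume ne: "card (lin Ls y u) \<noteq> n"
    then have gt: "Suc n \<le> card (lin Ls y u)" using lower[OF y u] by simp
    have sum: "(\<Sum>u\<in>L. card (lin Ls y u) - 1) = Suc n * (n - 1)" using cardP_gen[OF y] cardP by simp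
    have s1: "(\<Sum>u\<in>L. card (lin Ls y u) - 1) = (card (lin Ls y u) - 1) + (\<Sum>u\<in>L - {u}. card (lin Ls y u) - 1)"
      using sum.remove[OF L(3) u] .
    have s2: "card (L - {u}) * (n - 1) \<le> (\<Sum>u\<in>L - {u}. card (lin Ls y u) - 1)"
    proof -
      have le: "n - 1 \<le> card (lin Ls y i) - 1" if "i \<in> L - {u}" for i
        using lower[OF y] that by (simp add: diff_le_mono)
      show ?thesis using sum_bounded_below[of "L - {u}" "n - 1" "\<lambda>u. card (lin Ls y u) - 1", OF le] by simp
    qed
    have s3: "card (L - {u}) = n" using card_Diff_singleton[OF u] L(4) by simp
    have s4: "n * (n - 1) \<le> (\<Sum>u\<in>L - {u}. card (lin Ls y u) - 1)" using s2 unfolding s3 .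
    have "n * (n - 1) + (card (lin Ls y u) - 1) \<le> Suc n * (n - 1)" using sum s1 s4 by linarith
    moreover have "Suc n * (n - 1) = n * (n - 1) + (n - 1)" by simp
    ultimately show False using gt n3 by linarith
  qed
  obtain a where a: "a \<in> L" using a12 by blast
  have aP: "a \<in> P" using a L(2) by blast
  define Pa where "Pa = {N \<in> Ls. a \<in> N \<and> N \<subseteq> P \<and> N \<noteq> L}"
  have PaC: "card (N - {a}) = n - 1" if N: "N \<in> Pa" for N
  proof -
    have N': "N \<in> Ls" "a \<in> N" "N \<subseteq> P" "N \<noteq> L" using N unfolding Pa_def by blast+
    obtain p q where pq: "p \<in> N" "q \<in> N" "p \<noteq> q" using liner_two[OF lin N'(1)] by blast
    obtain y where yy: "y \<in> N" "y \<noteq> a"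
    proof (cases "p = a")
      case True then show ?thesis using that pq by blast
    next
      case False then show ?thesis using that pq by blast
    qed
    have yL: "y \<notin> L"
    proof
      assume "y \<in> L"
      then have "N = L" using line_eq[OF lin N'(1) L(1) N'(2) yy(1) a _ yy(2)[symmetric]] by blast
      then show False using N'(4) by simp
    qed
    have yP: "y \<in> P" using yy(1) N'(3) by blast
    have "lin Ls y a = N" using lin_eq[OF lin N'(1) yy(1) N'(2) yy(2)] .
    then have "card N = n" using exact[OF yP yL a] by simp
    then show ?thesis using card_Diff_singleton[OF N'(2)] by simp
  qed
  have PL: "P - L = (\<Union>N\<in>Pa. N - {a})"
  proof
    show "P - L \<subseteq> (\<Union>N\<in>Pa. N - {a})"
    proof
      fix z assume z: "z \<in> P - L"
      have za: "a \<noteq> z" using z a by blast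
      have N: "lin Ls a z \<in> Ls" "a \<in> lin Ls a z" "z \<in> lin Ls a z" using lp[OF aP _ za] z by blast+
      have "lin Ls a z \<subseteq> P" using linP[OF aP] z by blast
      moreover have "lin Ls a z \<noteq> L" using N(3) z by blast
      ultimately have "lin Ls a z \<in> Pa" unfolding Pa_def using N by blast
      then show "z \<in> (\<Union>N\<in>Pa. N - {a})" using N(3) za by blast
    qed
  next
    show "(\<Union>N\<in>Pa. N - {a}) \<subseteq> P - L"
    proof
      fix z assume "z \<in> (\<Union>N\<in>Pa. N - {a})"
      then obtain N where N: "N \<in> Pa" "z \<in> N" "z \<noteq> a" by blast
      have N': "N \<in> Ls" "a \<in> N" "N \<subseteq> P" "N \<noteq> L" using N(1) unfolding Pa_def by blast+
      have "z \<notin> L"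
      proof
        assume "z \<in> L"
        then have "N = L" using line_eq[OF lin N'(1) L(1) N'(2) N(2) a _ N(3)[symmetric]] by blast
        then show False using N'(4) by simp
      qed
      then show "z \<in> P - L" using N(2) N'(3) by blast
    qed
  qed
  have finPa: "finite Pa"
  proof -
    have "Pa \<subseteq> Pow P" unfolding Pa_def by blast
    then show ?thesis using finP finite_subset by blast
  qed
  have finN: "\<forall>N\<in>Pa. finite (N - {a})"
  proof
    fix N assume "N \<in> Pa"
    then have "N \<subseteq> P" unfolding Pa_def by blast
    then show "finite (N - {a})" using finP finite_subset by blast
  qed
  have disj: "\<forall>N1\<in>Pa. \<forall>N2\<in>Pa. N1 \<noteq> N2 \<longrightarrow> (N1 - {a}) \<inter> (N2 - {a}) = {}"
  proof (intro ballI impI)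
    fix N1 N2 assume N: "N1 \<in> Pa" "N2 \<in> Pa" "N1 \<noteq> N2"
    show "(N1 - {a}) \<inter> (N2 - {a}) = {}"
    proof (rule ccontr)
      assume "\<not> ?thesis"
      then obtain z where z: "z \<in> N1" "z \<in> N2" "z \<noteq> a" by blast
      have "N1 \<in> Ls" "a \<in> N1" "N2 \<in> Ls" "a \<in> N2" using N(1,2) unfolding Pa_def by blast+
      then have "N1 = N2" using line_eq[OF lin _ _ _ z(1) _ z(2) z(3)[symmetric]] by blast
      then show False using N(3) by simp
    qed
  qed
  have "card (P - L) = (\<Sum>N\<in>Pa. card (N - {a}))" unfolding PL using card_UN_disjoint[OF finPa finN disj] .
  also have "\<dots> = card Pa * (n - 1)" using PaC by simp
  finally have c1: "card (P - L) = card Pa * (n - 1)" .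
  have "card (P - L) = card P - card L" using card_Diff_subset[OF L(3) L(2)] .
  moreover have "card L \<le> card P" using card_mono[OF finP L(2)] .
  ultimately have c2: "card Pa * (n - 1) + Suc n = Suc (Suc n * (n - 1))" using c1 cardP L(4) by linarith
  obtain m where m: "n = Suc m" using n3 by (cases n) auto
  have m2: "2 \<le> m" using m n3 by simp
  have eq: "card Pa * m + m + 1 = m * m + m + m"
    using c2 unfolding m by (simp add: algebra_simps)
  show False
  proof (cases "card Pa \<le> m")
    case True
    have "card Pa * m \<le> m * m" using mult_le_mono1[OF True] .
    then show False using eq m2 by linarith
  next
    case False
    then have "Suc m \<le> card Pa" by simp
    then have "Suc m * m \<le> card Pa * m" by (rule mult_le_mono1)
    then have "m * m + m \<le> card Pa * m" by simp
    then show False using eq by linarith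
  qed
qed

lemma proclus_all:
  assumes lin: "liner X Ls" and tl: "three_long Ls" and pc: "proclus X Ls"
    and LK: "L \<in> Ls" "K \<in> Ls"
  shows "L \<lesssim> K <+> (UNIV :: unit set)"
proof (cases "L = K")
  case True then show ?thesis using near_lepoll[OF near_refl] by simp
next
  case ne: False
  show ?thesis
  proof (cases "L \<inter> K = {}")
    case False
    then obtain ob where "ob \<in> L" "ob \<in> K" by blast
    then show ?thesis using near_lepoll[OF near_proclus[OF lin tl pc LK ne]] by blast
  next
    case True
    obtain a where a: "a \<in> L" using liner_two[OF lin LK(1)] by blast
    obtain b where b: "b \<in> K" using liner_two[OF lin LK(2)] by blast
    have bL: "b \<notin> L" using b True by blast
    have trans: "near L (lin Ls b a') \<and> near (lin Ls b a') K" if a': "a' \<in> L" for a'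
    proof -
      have ab: "b \<noteq> a'" using a' bL by blast
      have X: "b \<in> X" "a' \<in> X" using a' b liner_sub[OF lin] LK by blast+
      have M: "lin Ls b a' \<in> Ls" "b \<in> lin Ls b a'" "a' \<in> lin Ls b a'" using lin_props[OF lin X ab] by blast+
      have "lin Ls b a' \<noteq> L" using M(2) bL by blast
      then have n1: "near L (lin Ls b a')" using near_proclus[OF lin tl pc LK(1) M(1) _ a' M(3)] by blast
      have "lin Ls b a' \<noteq> K" using M(3) a' True by blast
      then have n2: "near (lin Ls b a') K" using near_proclus[OF lin tl pc M(1) LK(2) _ M(2) b] by blast
      show ?thesis using n1 n2 by blast
    qed
    show ?thesis
    proof (cases "finite K")
      case False
      then show ?thesis using infinite_near2[OF near_trans2] trans[OF a] by blast
    next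
      case finK: True
      have cards: "finite (lin Ls b a') \<and> finite L \<and> card L \<le> card (lin Ls b a') + 1 \<and> card (lin Ls b a') \<le> card K + 1"
        if a': "a' \<in> L" for a'
      proof -
        have 1: "finite (lin Ls b a') \<and> card (lin Ls b a') \<le> card K + 1" using near_card[OF _ finK] trans[OF a'] by blast
        then have 2: "finite L \<and> card L \<le> card (lin Ls b a') + 1" using near_card[OF _ conjunct1[OF 1]] trans[OF a'] by blast
        show ?thesis using 1 2 by blast
      qed
      have finL: "finite L" using cards[OF a] by blast
      have finU: "finite (UNIV :: unit set)" by simp
      show ?thesis
      proof (cases "card L \<le> card K + 1")
        case True
        have "card (K <+> (UNIV :: unit set)) = card K + 1" using card_Plus[OF finK finU] by simp
        then show ?thesis using lepoll_iff_card_le[OF finL finite_Plus[OF finK finU]] True by simp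
      next
        case False
        define n where "n = card K + 1"
        have cL: "card L = Suc n" using False cards[OF a] unfolding n_def by linarith
        have sz: "\<forall>a'\<in>L. card (lin Ls b a') = n"
        proof
          fix a' assume a': "a' \<in> L"
          have "card L \<le> card (lin Ls b a') + 1" "card (lin Ls b a') \<le> card K + 1" using cards[OF a'] by blast+
          then show "card (lin Ls b a') = n" using False unfolding n_def by linarith
        qed
        have n3: "3 \<le> n" using three_card[OF tl LK(2) finK] unfolding n_def by simp
        obtain p q where pq: "p \<in> L" "q \<in> L" "p \<noteq> q" using liner_two[OF lin LK(1)] by blast
        have X: "p \<in> X" "q \<in> X" "b \<in> X" using pq b liner_sub[OF lin] LK by blast+
        have Lpq: "lin Ls p q = L" using lin_eq[OF lin LK(1) pq] .
        have bn: "b \<notin> lin Ls p q" using bL Lpq by simp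
        define P where "P = flat_hull X Ls {p, q, b}"
        have pl: "plane X Ls P" unfolding P_def using plane_hull[OF lin X pq(3) bn] .
        have sX: "{p, q, b} \<subseteq> X" using X by simp
        have fl: "flat X Ls P" unfolding P_def using hull_flat[OF lin sX] .
        have inP: "p \<in> P" "q \<in> P" "b \<in> P" unfolding P_def using hull_sub[of "{p,q,b}" X Ls] by blast+
        have LP: "L \<subseteq> P" using flat_lin[OF fl inP(1,2)] Lpq by simp
        show ?thesis using PC[OF lin pc pl LK(1) LP finL cL inP(3) bL sz n3] by blast
      qed
    qed
  qed
qed

theorem corollary3p3p26:
  fixes X :: "'a set" and Ls :: "'a set set"
  assumes "liner X Ls" and "three_long Ls"
  shows "(proaffine X Ls \<longrightarrow> (\<forall>L\<in>Ls. \<forall>M\<in>Ls. L \<lesssim> M <+> (UNIV :: bool set))) \<and>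
         (proclus X Ls \<longrightarrow> (\<forall>L\<in>Ls. \<forall>M\<in>Ls. L \<lesssim> M <+> (UNIV :: unit set)))"
  using proaff_all[OF assms] proclus_all[OF assms] by blast

end
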